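(* Assume CH. There exists a set $A\subseteq\mathbb{R}^2$ which is a Hamel basis of $\mathbb{R}^2$ over $\mathbb{Q}$ and such that for every straight line $l\subseteq\mathbb{R}^2$ and every isometry $T:\mathbb{R}\to l$ onto $l$, the set $T^{-1}(A\cap l)$ is a strong Sierpiński subset of $\mathbb{R}$.
   Context: A Sierpiński set is $S\subseteq\mathbb{R}$ with $|S|=\mathfrak{c}$ such that $S\cap N$ is countable for every Lebesgue-null $N\subseteq\mathbb{R}$; it is strong Sierpiński if moreover $S\cap B$ is uncountable for every Borel $B\subseteq\mathbb{R}$ of positive Lebesgue measure. A Hamel basis of $\mathbb{R}^2$ is a basis over $\mathbb{Q}$. *)

theory Defs
  imports "HOL-Analysis.Analysis" "HOL-Library.Equipollence"
begin

definition CH :: bool where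
  "CH \<longleftrightarrow> (\<forall>S :: real set. uncountable S \<longrightarrow> S \<approx> (UNIV :: real set))"

definition qscale :: "rat \<Rightarrow> real \<times> real \<Rightarrow> real \<times> real" where
  "qscale q x = of_rat q *\<^sub>R x"

definition hamel_basis_R2 :: "(real \<times> real) set \<Rightarrow> bool" where
  "hamel_basis_R2 A \<longleftrightarrow> \<not> module.dependent qscale A \<and> module.span qscale A = UNIV"

definition sierpinski_set :: "real set \<Rightarrow> bool" where
  "sierpinski_set S \<longleftrightarrow> S \<approx> (UNIV :: real set) \<and>
     (\<forall>N \<in> null_sets lebesgue. countable (S \<inter> N))"

definition strong_sierpinski_set :: "real set \<Rightarrow> bool" where
  "strong_sierpinski_set S \<longleftrightarrow> sierpinski_set S \<and>
     (\<forall>B \<in> sets borel. emeasure lborel B > 0 \<longrightarrow> uncountable (S \<inter> B))"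

definition is_line :: "(real \<times> real) set \<Rightarrow> bool" where
  "is_line l \<longleftrightarrow> (\<exists>p v. v \<noteq> 0 \<and> l = {p + t *\<^sub>R v | t. True})"

definition isometry_onto :: "(real \<Rightarrow> real \<times> real) \<Rightarrow> (real \<times> real) set \<Rightarrow> bool" where
  "isometry_onto T l \<longleftrightarrow> (\<forall>x y. dist (T x) (T y) = dist x y) \<and> range T = l"

end

theory Submission
  imports Defs
begin

unbundle cardinal_syntax

lemma CH_wo:
  assumes "CH"
  shows "\<exists>r::real rel. Well_order r \<and> Field r = UNIV \<and> (\<forall>a. countable (underS r a))"
proof (intro exI conjI allI)
  let ?r = "(card_of (UNIV::real set))"
  show "Well_order ?r" by (rule card_of_Well_order)
  show "Field ?r = UNIV" by (simp add: Field_card_of)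
  fix a
  show "countable (underS ?r a)"
  proof (rule ccontr)
    assume "uncountable (underS ?r a)"
    then have "underS ?r a \<approx> (UNIV::real set)" using assms unfolding CH_def by blast
    then have "(card_of (underS ?r a)) =o ?r" by (simp add: eqpoll_iff_card_of_ordIso)
    moreover have "(card_of (underS ?r a)) <o ?r" by (rule card_of_underS[OF card_of_Card_order]) (simp add: Field_card_of)
    ultimately show False using not_ordLess_ordIso by blast
  qed
qed

lemma real_pair_bij: "\<exists>h::real \<Rightarrow> real \<times> real. surj h"
proof -
  have inf: "\<not> finite (UNIV::real set)" by (rule infinite_UNIV_char_0)
  have "\<exists>f. bij_betw f (UNIV::real set) ((UNIV::real set) \<times> (UNIV::real set))"
    using card_of_ordIso ordIso_symmetric[OF card_of_Times_same_infinite[OF inf]] by blast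
  then obtain h where "bij_betw h (UNIV::real set) ((UNIV::real set) \<times> (UNIV::real set))" by blast
  then show ?thesis by (auto simp: bij_betw_def)
qed



definition Tc :: "real \<times> real \<Rightarrow> real \<times> real \<Rightarrow> real \<Rightarrow> real \<times> real" where
  "Tc p v t = p + (t / norm v) *\<^sub>R v"

definition Tinv :: "real \<times> real \<Rightarrow> real \<times> real \<Rightarrow> real \<times> real \<Rightarrow> real" where
  "Tinv p v y = ((y - p) \<bullet> v) / norm v"

lemma Tinv_Tc: "v \<noteq> 0 \<Longrightarrow> Tinv p v (Tc p v t) = t"
  by (simp add: Tc_def Tinv_def inner_commute power2_norm_eq_inner[symmetric] power2_eq_square)

lemma dist_Tc: "v \<noteq> 0 \<Longrightarrow> dist (Tc p v s) (Tc p v t) = dist s t"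
proof -
  assume v: "v \<noteq> 0"
  have "Tc p v s - Tc p v t = ((s - t) / norm v) *\<^sub>R v" by (simp add: Tc_def algebra_simps diff_divide_distrib)
  then show ?thesis using v by (simp add: dist_norm dist_real_def)
qed

lemma inj_Tc: "v \<noteq> 0 \<Longrightarrow> inj (Tc p v)"
  by (metis Tinv_Tc injI)

lemma range_Tc: "v \<noteq> 0 \<Longrightarrow> range (Tc p v) = {p + t *\<^sub>R v | t. True}"
proof -
  assume v: "v \<noteq> 0"
  show ?thesis
  proof (intro set_eqI iffI)
    fix y assume "y \<in> range (Tc p v)"
    then show "y \<in> {p + t *\<^sub>R v | t. True}" by (auto simp: Tc_def)
  next
    fix y assume "y \<in> {p + t *\<^sub>R v | t. True}"
    then obtain t where "y = p + t *\<^sub>R v" by auto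
    then have "y = Tc p v (t * norm v)" using v by (simp add: Tc_def)
    then show "y \<in> range (Tc p v)" by auto
  qed
qed

lemma Tc_reflect: "Tc (x - p) (- v) t = x - Tc p v t"
  by (simp add: Tc_def algebra_simps)

lemma negligible_line: "v \<noteq> 0 \<Longrightarrow> negligible (range (Tc p v))"
proof -
  assume v: "v \<noteq> 0"
  obtain a b where ab: "v = (a, b)" by (cases v)
  let ?w = "(- b, a)"
  have w: "?w \<noteq> 0" using v ab by (auto simp: zero_prod_def)
  have "range (Tc p v) \<subseteq> {x. ?w \<bullet> x = ?w \<bullet> p}"
    by (auto simp: Tc_def ab inner_add_right algebra_simps)
  then show ?thesis using negligible_hyperplane[of ?w "?w \<bullet> p"] w negligible_subset by blast
qed

lemma negligible_iso_image:
  fixes f :: "real \<Rightarrow> real"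
  assumes "negligible S" "\<And>x y. x \<in> S \<Longrightarrow> y \<in> S \<Longrightarrow> dist (f x) (f y) \<le> dist x y"
  shows "negligible (f ` S)"
proof (rule negligible_locally_Lipschitz_image)
  show "DIM(real) \<le> DIM(real)" by simp
  show "negligible S" by fact
  fix x assume "x \<in> S"
  show "\<exists>T B. open T \<and> x \<in> T \<and> (\<forall>y\<in>S \<inter> T. norm (f y - f x) \<le> B * norm (y - x))"
    using assms(2) \<open>x \<in> S\<close> by (intro exI[of _ UNIV] exI[of _ 1]) (auto simp: dist_norm)
qed



definition Iv :: "nat \<Rightarrow> real set" where
  "Iv n = (case (from_nat n :: rat \<times> rat) of (a, b) \<Rightarrow> {of_rat a <..< of_rat b})"

lemma open_Iv: "open (Iv n)"
  by (simp add: Iv_def split: prod.splits)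

lemma open_union_Iv:
  assumes "open U" shows "(\<Union>{Iv n | n. Iv n \<subseteq> U}) = U"
proof (intro set_eqI iffI)
  fix x assume "x \<in> \<Union>{Iv n | n. Iv n \<subseteq> U}" then show "x \<in> U" by auto
next
  fix x assume "x \<in> U"
  then obtain e where e: "e > 0" "ball x e \<subseteq> U" using assms open_contains_ball by blast
  obtain a where a: "a \<in> \<rat>" "x - e < a" "a < x" using Rats_dense_in_real[of "x - e" x] e by auto
  obtain b where b: "b \<in> \<rat>" "x < b" "b < x + e" using Rats_dense_in_real[of x "x + e"] e by auto
  obtain qa where qa: "a = of_rat qa" using a(1) Rats_cases by blast
  obtain qb where qb: "b = of_rat qb" using b(1) Rats_cases by blast
  let ?n = "to_nat (qa, qb)"
  have I: "Iv ?n = {a <..< b}" by (simp add: Iv_def qa qb)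
  have "{a <..< b} \<subseteq> ball x e" using a b by (auto simp: dist_real_def)
  then have "Iv ?n \<subseteq> U" using I e by auto
  moreover have "x \<in> Iv ?n" using I a b by auto
  ultimately show "x \<in> \<Union>{Iv n | n. Iv n \<subseteq> U}" by blast
qed

definition Gd :: "nat set \<Rightarrow> real set" where
  "Gd S = (\<Inter>m. \<Union>{Iv n | n. prod_encode (m, n) \<in> S})"

definition Cl :: "nat set \<Rightarrow> real set" where
  "Cl S = - \<Union>{Iv n | n. n \<in> S}"

lemma closed_code: assumes "closed K" shows "\<exists>S. Cl S = K"
proof -
  have "open (- K)" using assms by auto
  then have "\<Union>{Iv n | n. n \<in> {n. Iv n \<subseteq> - K}} = - K" using open_union_Iv by auto
  then have "Cl {n. Iv n \<subseteq> - K} = K" unfolding Cl_def by simp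
  then show ?thesis by blast
qed

lemma negligible_Gd_cover:
  assumes "negligible N"
  shows "\<exists>S. N \<subseteq> Gd S \<and> negligible (Gd S)"
proof -
  have NL: "N \<in> sets lebesgue" "N \<in> lmeasurable" "measure lebesgue N = 0"
    using assms negligible_imp_sets negligible_imp_measurable negligible_imp_measure0 by auto
  have "\<exists>U. open U \<and> N \<subseteq> U \<and> U \<in> lmeasurable \<and> measure lebesgue U < 1 / (real m + 1)" for m :: nat
  proof -
    have e: "(0::real) < 1 / (real m + 1)" by simp
    obtain U where U: "open U" "N \<subseteq> U" "(U - N) \<in> lmeasurable" "emeasure lebesgue (U - N) < ennreal (1 / (real m + 1))"
      using sets_lebesgue_outer_open[OF NL(1) e] by blast
    have m1: "measure lebesgue (U - N) < 1 / (real m + 1)"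
      using U(4) emeasure_eq_measure2[OF U(3)] by (simp add: ennreal_less_iff)
    have eqU: "U = (U - N) \<union> N" using U(2) by auto
    have Ul: "U \<in> lmeasurable" using U(3) NL(2) eqU by (metis fmeasurable.Un)
    have "measure lebesgue U \<le> measure lebesgue (U - N) + measure lebesgue N"
      using measure_Un_le[of "U - N" lebesgue N] U(3) NL(2) eqU by (metis fmeasurableD)
    then show ?thesis using U Ul m1 NL(3) by (intro exI[of _ U]) auto
  qed
  then obtain U where U: "\<And>m. open (U m)" "\<And>m. N \<subseteq> U m" "\<And>m. U m \<in> lmeasurable"
     "\<And>m. measure lebesgue (U m) < 1 / (real m + 1)" by metis
  define S where "S = {prod_encode (m, n) | m n. Iv n \<subseteq> U m}"
  have "\<Union>{Iv n | n. prod_encode (m, n) \<in> S} = U m" for m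
  proof -
    have "{n. prod_encode (m, n) \<in> S} = {n. Iv n \<subseteq> U m}"
      by (auto simp: S_def dest: inj_prod_encode[THEN injD, simplified])
    then have "{Iv n | n. prod_encode (m, n) \<in> S} = {Iv n | n. Iv n \<subseteq> U m}" by blast
    then show ?thesis using open_union_Iv[OF U(1)[of m]] by simp
  qed
  then have G: "Gd S = (\<Inter>m. U m)" by (simp add: Gd_def)
  have "negligible (Gd S)"
    unfolding negligible_outer
  proof (intro allI impI)
    fix e :: real assume e: "e > 0"
    obtain m :: nat where m: "1 / (real m + 1) < e"
    proof -
      obtain k :: nat where k: "1 / real (Suc k) < e" using nat_approx_posE[OF e] by blast
      then show ?thesis using that[of k] by (simp add: add.commute)
    qed
    show "\<exists>T. Gd S \<subseteq> T \<and> T \<in> lmeasurable \<and> measure lebesgue T < e"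
      using U(3,4)[of m] m G by (intro exI[of _ "U m"]) auto
  qed
  moreover have "N \<subseteq> Gd S" using G U(2) by auto
  ultimately show ?thesis by blast
qed

lemma positive_compact:
  assumes B: "B \<in> sets borel" and pos: "emeasure lborel B > 0"
  shows "\<exists>K. compact K \<and> K \<subseteq> B \<and> \<not> negligible (K :: real set)"
proof -
  have BL: "B \<in> sets lebesgue" using B by (simp only: sets_lborel[symmetric] sets_completionI_sets)
  have "\<not> negligible B"
  proof
    assume "negligible B"
    then have "emeasure lebesgue B = 0" using BL negligible_iff_emeasure0 by blast
    moreover have "emeasure lebesgue B = emeasure lborel B" using BL B by simp
    ultimately show False using pos by simp
  qed
  then obtain n :: nat where n: "\<not> negligible (B \<inter> cball 0 (real n))"
  proof -
    assume H: "\<And>n::nat. \<not> negligible (B \<inter> cball 0 (real n)) \<Longrightarrow> thesis"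
    show thesis
    proof (rule ccontr)
      assume "\<not> thesis"
      then have "negligible (\<Union>n::nat. B \<inter> cball 0 (real n))" using H by (intro negligible_Union_nat) blast
      moreover have "(\<Union>n::nat. B \<inter> cball 0 (real n)) = B"
        by (auto simp: dist_real_def) (metis real_arch_simple)
      ultimately show False using \<open>\<not> negligible B\<close> by simp
    qed
  qed
  let ?Bn = "B \<inter> cball 0 (real n)"
  have Bnl: "?Bn \<in> lmeasurable"
    by (rule bounded_set_imp_lmeasurable) (auto simp: BL)
  have mpos: "measure lebesgue ?Bn > 0"
    using n Bnl negligible_iff_measure0 measure_nonneg by (metis less_eq_real_def)
  obtain T where T: "closed T" "T \<subseteq> ?Bn" "?Bn - T \<in> lmeasurable" "emeasure lebesgue (?Bn - T) < ennreal (measure lebesgue ?Bn)"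
    using sets_lebesgue_inner_closed[OF fmeasurableD[OF Bnl] mpos] by blast
  have "\<not> negligible T"
  proof
    assume Tn: "negligible T"
    have m1: "measure lebesgue (?Bn - T) < measure lebesgue ?Bn"
      using T(4) emeasure_eq_measure2[OF T(3)] by (simp add: ennreal_less_iff)
    have "measure lebesgue ?Bn \<le> measure lebesgue (?Bn - T) + measure lebesgue T"
    proof -
      have eq: "?Bn = (?Bn - T) \<union> T" using T(2) by auto
      show ?thesis using measure_Un_le[of "?Bn - T" lebesgue T] T(3) negligible_imp_measurable[OF Tn] eq
        by (metis fmeasurableD)
    qed
    then show False using m1 Tn negligible_imp_measure0 by fastforce
  qed
  moreover have "compact T"
  proof -
    have "T \<subseteq> cball 0 (real n)" using T(2) by blast
    then have "bounded T" using bounded_subset[OF bounded_cball] by blast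
    then show ?thesis using T(1) by (simp add: compact_eq_bounded_closed)
  qed
  ultimately show ?thesis using T(2) by blast
qed



interpretation Q: vector_space qscale
  by unfold_locales (simp_all add: qscale_def of_rat_add of_rat_mult scaleR_add_right scaleR_add_left)

lemma countable_span:
  assumes "countable P" shows "countable (Q.span P)"
proof -
  let ?f = "\<lambda>xs. sum_list (map (\<lambda>(q, a). qscale q a) xs)"
  have "Q.span P \<subseteq> ?f ` lists (UNIV \<times> P)"
  proof
    fix y assume "y \<in> Q.span P"
    then have "\<exists>t r. y = (\<Sum>a\<in>t. qscale (r a) a) \<and> finite t \<and> t \<subseteq> P"
      unfolding Q.span_explicit by blast
    then obtain t r where tr: "finite t" "t \<subseteq> P" "y = (\<Sum>a\<in>t. qscale (r a) a)" by blast
    obtain xs where xs: "set xs = t" "distinct xs" using finite_distinct_list[OF tr(1)] by blast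
    have "y = sum_list (map (\<lambda>a. qscale (r a) a) xs)"
      using tr(3) sum_list_distinct_conv_sum_set[OF xs(2), of "\<lambda>a. qscale (r a) a"] xs(1) by simp
    also have "\<dots> = ?f (map (\<lambda>a. (r a, a)) xs)" by (induct xs) auto
    finally have "y = ?f (map (\<lambda>a. (r a, a)) xs)" .
    moreover have "map (\<lambda>a. (r a, a)) xs \<in> lists (UNIV \<times> P)" using xs tr(2) by auto
    ultimately show "y \<in> ?f ` lists (UNIV \<times> P)" by blast
  qed
  moreover have "countable ((UNIV::rat set) \<times> P)" using assms by (intro countable_SIGMA) auto
  then have "countable (lists ((UNIV::rat set) \<times> P))" by (rule countable_lists)
  ultimately show ?thesis using countable_subset countable_image by metis
qed



lemma pre_line_negligible:
  assumes v: "v \<noteq> 0" and v': "v' \<noteq> 0" and G: "negligible G"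
  shows "negligible {t. Tc p v t \<in> Tc p' v' ` G}"
proof -
  let ?S = "{s \<in> G. Tc p' v' s \<in> range (Tc p v)}"
  let ?f = "\<lambda>s. Tinv p v (Tc p' v' s)"
  have "negligible (?f ` ?S)"
  proof (rule negligible_iso_image)
    show "negligible ?S" using G by (rule negligible_subset) auto
    fix x y assume x: "x \<in> ?S" and y: "y \<in> ?S"
    then obtain u w where u: "Tc p' v' x = Tc p v u" and w: "Tc p' v' y = Tc p v w" by auto
    have "dist (?f x) (?f y) = dist u w" using u w v by (simp add: Tinv_Tc)
    also have "\<dots> = dist (Tc p v u) (Tc p v w)" using v by (simp add: dist_Tc)
    also have "\<dots> = dist x y" using u w v' by (metis dist_Tc)
    finally show "dist (?f x) (?f y) \<le> dist x y" by simp
  qed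
  moreover have "{t. Tc p v t \<in> Tc p' v' ` G} \<subseteq> ?f ` ?S"
  proof
    fix t assume "t \<in> {t. Tc p v t \<in> Tc p' v' ` G}"
    then obtain s where s: "s \<in> G" "Tc p v t = Tc p' v' s" by auto
    then have "t = ?f s" using v by (metis Tinv_Tc)
    moreover have "s \<in> ?S" using s by (metis (mono_tags, lifting) mem_Collect_eq rangeI)
    ultimately show "t \<in> ?f ` ?S" by blast
  qed
  ultimately show ?thesis using negligible_subset by blast
qed

type_synonym data = "(real \<times> real) \<times> ((real \<times> real) \<times> (real \<times> real) \<times> nat set) \<times> ((real \<times> real) \<times> (real \<times> real) \<times> nat set) \<times> real"

locale constr =
  fixes r :: "real rel" and code :: "data \<Rightarrow> real"
  assumes wo: "Well_order r" and fld: "Field r = UNIV" and cnt: "\<And>a. countable (underS r a)"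
    and injc: "inj code"
begin

definition dec :: "real \<Rightarrow> data" where "dec = inv code"
lemma dec_code[simp]: "dec (code d) = d" by (simp add: dec_def injc)

definition pt where "pt i = fst (dec i)"
definition Z where "Z i = (case fst (snd (dec i)) of (p, v, S) \<Rightarrow> if v \<noteq> 0 \<and> negligible (Gd S) then Tc p v ` Gd S else {})"
definition posok where "posok i = (case fst (snd (snd (dec i))) of (p, v, S) \<Rightarrow> v \<noteq> 0 \<and> \<not> negligible (Cl S))"
definition PC where "PC i = (case fst (snd (snd (dec i))) of (p, v, S) \<Rightarrow> Tc p v ` Cl S)"
definition W where "W i = (\<Union>j\<in>underS r i. Z j)"
definition bsel where "bsel i X = (SOME b. b \<in> PC i \<and> b \<notin> Q.span X \<and> b \<notin> W i)"
definition Bp where "Bp i X = (if posok i then {bsel i X} else {})"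
definition asel where "asel i X = (SOME a. a \<notin> Q.span (insert (pt i) X) \<and> a \<notin> W i \<and> pt i - a \<notin> W i)"
definition Ap where "Ap i X = (if pt i \<in> Q.span X then {} else {asel i X, pt i - asel i X})"
definition stage where "stage i X = Bp i X \<union> Ap i (X \<union> Bp i X)"
definition F where "F = wfrec (r - Id) (\<lambda>g i. stage i (\<Union>j\<in>underS r i. g j))"
definition Pre where "Pre i = (\<Union>j\<in>underS r i. F j)"

lemma wfR: "wf (r - Id)" using wo by (simp add: wo_rel.WF wo_rel_def)

lemma underS_iff: "j \<in> underS r i \<longleftrightarrow> (j, i) \<in> r - Id"
  by (auto simp: underS_def)

lemma F_eq: "F i = stage i (Pre i)"
proof -
  have "F i = stage i (\<Union>j\<in>underS r i. cut F (r - Id) i j)"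
    unfolding F_def by (subst wfrec[OF wfR]) simp
  also have "(\<Union>j\<in>underS r i. cut F (r - Id) i j) = Pre i"
    unfolding Pre_def by (intro SUP_cong refl) (simp add: cut_apply underS_iff)
  finally show ?thesis .
qed

lemma finite_stage: "finite (stage i X)"
  by (simp add: stage_def Bp_def Ap_def)

lemma countable_Pre: "countable (Pre i)"
  unfolding Pre_def using cnt by (intro countable_UN) (auto simp: F_eq finite_stage intro: countable_finite)

lemma Z_line: "\<exists>p v. v \<noteq> 0 \<and> Z j \<subseteq> range (Tc p v)"
proof -
  obtain p v S where d: "fst (snd (dec j)) = (p, v, S)" by (metis prod.exhaust)
  show ?thesis
  proof (cases "v \<noteq> 0 \<and> negligible (Gd S)")
    case True then show ?thesis by (intro exI[of _ p] exI[of _ v]) (auto simp: Z_def d)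
  next
    case False
    then have "Z j = {}" unfolding Z_def d by auto
    moreover have "((1::real), (0::real)) \<noteq> 0" by (simp add: zero_prod_def)
    ultimately show ?thesis by blast
  qed
qed

lemma negligible_W: "negligible (W i)"
  unfolding W_def
proof (rule negligible_countable_Union)
  show "countable (Z ` underS r i)" using cnt by simp
  fix S assume "S \<in> Z ` underS r i"
  then obtain j where "S = Z j" by auto
  then show "negligible S" using Z_line[of j] negligible_line negligible_subset by metis
qed

lemma negligible_W_refl: "negligible ((\<lambda>w. x - w) ` W i)"
proof -
  have "(\<lambda>w. x - w) ` W i = (\<Union>j\<in>underS r i. (\<lambda>w. x - w) ` Z j)" by (auto simp: W_def)
  also have "negligible \<dots>"
  proof (rule negligible_countable_Union)
    show "countable ((\<lambda>j. (\<lambda>w. x - w) ` Z j) ` underS r i)" using cnt by simp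
    fix S assume "S \<in> (\<lambda>j. (\<lambda>w. x - w) ` Z j) ` underS r i"
    then obtain j where S: "S = (\<lambda>w. x - w) ` Z j" by auto
    obtain p v where pv: "v \<noteq> 0" "Z j \<subseteq> range (Tc p v)" using Z_line by blast
    have "S \<subseteq> range (Tc (x - p) (- v))" using pv(2) unfolding S by (auto simp: Tc_reflect)
    moreover have "negligible (range (Tc (x - p) (- v)))" using pv(1) by (intro negligible_line) simp
    ultimately show "negligible S" using negligible_subset by blast
  qed
  finally show ?thesis .
qed

end


lemma negligible_countable: "countable A \<Longrightarrow> negligible A"
proof -
  assume "countable A"
  then have "negligible (\<Union>x\<in>A. {x})" by (intro negligible_countable_Union) auto
  then show "negligible A" by simp
qed

context constr begin

lemma exists_b:
  assumes ok: "posok i" and X: "countable X"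
  shows "\<exists>b. b \<in> PC i \<and> b \<notin> Q.span X \<and> b \<notin> W i"
proof -
  obtain p v S where d: "fst (snd (snd (dec i))) = (p, v, S)" by (metis prod.exhaust)
  have v: "v \<noteq> 0" and C: "\<not> negligible (Cl S)" using ok by (auto simp: posok_def d)
  have PC: "PC i = Tc p v ` Cl S" by (simp add: PC_def d)
  let ?B1 = "{t. Tc p v t \<in> Q.span X}"
  let ?B2 = "\<Union>j\<in>underS r i. {t. Tc p v t \<in> Z j}"
  have "countable ?B1"
  proof (rule countable_image_inj_on)
    show "countable (Tc p v ` ?B1)" using countable_span[OF X] countable_subset by (metis (no_types, lifting) image_Collect_subsetI)
    show "inj_on (Tc p v) ?B1" using inj_Tc[OF v] by (simp add: inj_on_def inj_def)
  qed
  then have n1: "negligible ?B1" by (rule negligible_countable)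
  have n2: "negligible ?B2"
  proof (rule negligible_countable_Union)
    show "countable ((\<lambda>j. {t. Tc p v t \<in> Z j}) ` underS r i)" using cnt by simp
    fix T assume "T \<in> (\<lambda>j. {t. Tc p v t \<in> Z j}) ` underS r i"
    then obtain j where T: "T = {t. Tc p v t \<in> Z j}" by auto
    obtain p' v' S' where d': "fst (snd (dec j)) = (p', v', S')" by (metis prod.exhaust)
    show "negligible T"
    proof (cases "v' \<noteq> 0 \<and> negligible (Gd S')")
      case True
      then have "Z j = Tc p' v' ` Gd S'" by (simp add: Z_def d')
      then show ?thesis using pre_line_negligible[OF v _ , of v' "Gd S'" p p'] True T by simp
    next
      case False
      then have "Z j = {}" unfolding Z_def d' by auto
      then show ?thesis using T by simp
    qed
  qed
  have "\<not> Cl S \<subseteq> ?B1 \<union> ?B2"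
    using C n1 n2 negligible_Un negligible_subset by metis
  then obtain t where t: "t \<in> Cl S" "t \<notin> ?B1" "t \<notin> ?B2" by blast
  have "Tc p v t \<notin> W i" using t(3) by (auto simp: W_def)
  then show ?thesis using t PC by (intro exI[of _ "Tc p v t"]) auto
qed

lemma exists_a:
  assumes X: "countable X"
  shows "\<exists>a. a \<notin> Q.span (insert x X) \<and> a \<notin> W i \<and> x - a \<notin> W i"
proof -
  have "countable (Q.span (insert x X))" using X by (intro countable_span) simp
  then have n: "negligible (Q.span (insert x X) \<union> W i \<union> (\<lambda>w. x - w) ` W i)"
    using negligible_countable negligible_W negligible_W_refl negligible_Un by metis
  have "\<not> (UNIV :: (real \<times> real) set) \<subseteq> Q.span (insert x X) \<union> W i \<union> (\<lambda>w. x - w) ` W i"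
    using n negligible_subset non_negligible_UNIV by metis
  then obtain a where a: "a \<notin> Q.span (insert x X)" "a \<notin> W i" "a \<notin> (\<lambda>w. x - w) ` W i" by blast
  have "x - a \<notin> W i"
  proof
    assume "x - a \<in> W i"
    then have "x - (x - a) \<in> (\<lambda>w. x - w) ` W i" by blast
    then show False using a(3) by simp
  qed
  then show ?thesis using a by blast
qed

lemma bsel: "posok i \<Longrightarrow> countable X \<Longrightarrow> bsel i X \<in> PC i \<and> bsel i X \<notin> Q.span X \<and> bsel i X \<notin> W i"
  unfolding bsel_def by (rule someI_ex) (rule exists_b)

lemma asel: "countable X \<Longrightarrow> asel i X \<notin> Q.span (insert (pt i) X) \<and> asel i X \<notin> W i \<and> pt i - asel i X \<notin> W i"
  unfolding asel_def by (rule someI_ex) (rule exists_a)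

lemma stage_W: assumes X: "countable X" shows "stage i X \<inter> W i = {}"
proof -
  have X1: "countable (X \<union> Bp i X)" using X by (simp add: Bp_def)
  show ?thesis using bsel[OF _ X, of i] asel[OF X1, of i]
    by (auto simp: stage_def Bp_def Ap_def)
qed

lemma stage_pt: "pt i \<in> Q.span (X \<union> stage i X)"
proof -
  let ?X1 = "X \<union> Bp i X"
  show ?thesis
  proof (cases "pt i \<in> Q.span ?X1")
    case True
    then show ?thesis using Q.span_mono[of ?X1 "X \<union> stage i X"] by (auto simp: stage_def)
  next
    case False
    let ?a = "asel i ?X1"
    have "?a \<in> Q.span (X \<union> stage i X)" "pt i - ?a \<in> Q.span (X \<union> stage i X)"
      using False by (auto simp: stage_def Ap_def intro: Q.span_base)
    then have "?a + (pt i - ?a) \<in> Q.span (X \<union> stage i X)" by (rule Q.span_add)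
    then show ?thesis by simp
  qed
qed

lemma stage_indep:
  assumes X: "countable X" and ind: "Q.independent X"
  shows "Q.independent (X \<union> stage i X)"
proof -
  let ?X1 = "X \<union> Bp i X"
  have X1: "countable ?X1" using X by (simp add: Bp_def)
  have ind1: "Q.independent ?X1"
  proof (cases "posok i")
    case True
    then have "?X1 = insert (bsel i X) X" by (simp add: Bp_def)
    then show ?thesis using bsel[OF True X] ind Q.independent_insertI by simp
  next
    case False then show ?thesis using ind by (simp add: Bp_def)
  qed
  show ?thesis
  proof (cases "pt i \<in> Q.span ?X1")
    case True
    then have "X \<union> stage i X = ?X1" by (auto simp: stage_def Ap_def)
    then show ?thesis using ind1 by simp
  next
    case False
    let ?a = "asel i ?X1" and ?x = "pt i"
    have a: "?a \<notin> Q.span (insert ?x ?X1)" using asel[OF X1] by blast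
    have eq: "X \<union> stage i X = insert (?x - ?a) (insert ?a ?X1)" using False by (auto simp: stage_def Ap_def)
    have a1: "?a \<notin> Q.span ?X1" using a Q.span_mono[of ?X1 "insert ?x ?X1"] by blast
    have ind2: "Q.independent (insert ?a ?X1)" using Q.independent_insertI[OF a1 ind1] .
    have "?x - ?a \<notin> Q.span (insert ?a ?X1)"
    proof
      assume h: "?x - ?a \<in> Q.span (insert ?a ?X1)"
      have "?a \<in> Q.span (insert ?a ?X1)" by (rule Q.span_base) simp
      then have "(?x - ?a) + ?a \<in> Q.span (insert ?a ?X1)" using h Q.span_add by blast
      then have "?x \<in> Q.span (insert ?a ?X1)" by simp
      then have "?a \<in> Q.span (insert ?x ?X1)" using Q.in_span_insert False by blast
      then show False using a by blast
    qed
    then show ?thesis using eq Q.independent_insertI[OF _ ind2] by simp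
  qed
qed

lemma bsel_in_stage: "posok i \<Longrightarrow> bsel i X \<in> stage i X"
  by (simp add: stage_def Bp_def)

end


context constr begin

definition U where "U i = Pre i \<union> F i"
definition Aset where "Aset = (\<Union>i. F i)"

lemma wor: "wo_rel r" using wo by (simp add: wo_rel_def)

lemma totalr: "(i, j) \<in> r \<or> (j, i) \<in> r"
  using wo_rel.TOTALS[OF wor] fld by simp

lemma transr: "(a, b) \<in> r \<Longrightarrow> (b, c) \<in> r \<Longrightarrow> (a, c) \<in> r"
  using wo_rel.TRANS[OF wor] unfolding trans_def by blast

lemma antisymr: "(a, b) \<in> r \<Longrightarrow> (b, a) \<in> r \<Longrightarrow> a = b"
  using wo_rel.ANTISYM[OF wor] unfolding antisym_def by blast

lemma Pre_mono: assumes "(j, i) \<in> r" shows "Pre j \<subseteq> Pre i"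
proof
  fix x assume "x \<in> Pre j"
  then obtain k where k: "k \<in> underS r j" "x \<in> F k" by (auto simp: Pre_def)
  have "(k, i) \<in> r" using k(1) assms transr by (auto simp: underS_def)
  moreover have "k \<noteq> i"
  proof
    assume "k = i"
    then have "(i, j) \<in> r" "i \<noteq> j" using k(1) by (auto simp: underS_def)
    then show False using assms antisymr by blast
  qed
  ultimately have "k \<in> underS r i" by (auto simp: underS_def)
  then show "x \<in> Pre i" using k(2) by (auto simp: Pre_def)
qed

lemma U_mono: assumes "(j, i) \<in> r" shows "U j \<subseteq> U i"
proof (cases "j = i")
  case True then show ?thesis by simp
next
  case False
  then have "j \<in> underS r i" using assms by (auto simp: underS_def)
  then have "F j \<subseteq> Pre i" by (auto simp: Pre_def)
  then show ?thesis using Pre_mono[OF assms] by (auto simp: U_def)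
qed

lemma Pre_U: "Pre i = \<Union> (U ` underS r i)"
proof
  show "Pre i \<subseteq> \<Union> (U ` underS r i)" by (auto simp: Pre_def U_def)
  show "\<Union> (U ` underS r i) \<subseteq> Pre i"
  proof
    fix x assume "x \<in> \<Union> (U ` underS r i)"
    then obtain j where j: "j \<in> underS r i" "x \<in> U j" by auto
    have "(j, i) \<in> r" using j(1) by (auto simp: underS_def)
    then have "Pre j \<subseteq> Pre i" by (rule Pre_mono)
    moreover have "F j \<subseteq> Pre i" using j(1) by (auto simp: Pre_def)
    ultimately show "x \<in> Pre i" using j(2) by (auto simp: U_def)
  qed
qed

lemma directed_U: "c \<in> range U \<Longrightarrow> d \<in> range U \<Longrightarrow> c \<subseteq> d \<or> d \<subseteq> c"
proof -
  assume "c \<in> range U" "d \<in> range U"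
  then obtain i j where "c = U i" "d = U j" by auto
  then show ?thesis using totalr[of i j] U_mono[of i j] U_mono[of j i] by auto
qed

lemma indep_U: "Q.independent (U i)"
proof (induction i rule: wf_induct[OF wfR])
  case (1 i)
  have "Q.independent (\<Union> (U ` underS r i))"
  proof (rule Q.independent_Union_directed)
    show "\<And>c d. c \<in> U ` underS r i \<Longrightarrow> d \<in> U ` underS r i \<Longrightarrow> c \<subseteq> d \<or> d \<subseteq> c"
      using directed_U by blast
    show "\<And>c. c \<in> U ` underS r i \<Longrightarrow> Q.independent c" using 1 underS_iff by blast
  qed
  then have "Q.independent (Pre i)" by (simp add: Pre_U)
  then show ?case unfolding U_def F_eq using stage_indep[OF countable_Pre] by blast
qed

lemma countable_U: "countable (U i)"
  by (simp add: U_def countable_Pre F_eq finite_stage countable_finite)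

lemma Aset_U: "Aset = \<Union> (range U)"
  by (auto simp: Aset_def U_def Pre_def)

lemma indep_A: "Q.independent Aset"
  unfolding Aset_U by (rule Q.independent_Union_directed) (use directed_U indep_U in auto)

lemma span_A: "Q.span Aset = UNIV"
proof -
  have "x \<in> Q.span Aset" for x
  proof -
    let ?i = "code (x, ((0,0),(0,0),{}), ((0,0),(0,0),{}), 0)"
    have "pt ?i = x" by (simp add: pt_def)
    moreover have "pt ?i \<in> Q.span (U ?i)" using stage_pt by (simp add: U_def F_eq)
    moreover have "U ?i \<subseteq> Aset" by (auto simp: Aset_U)
    ultimately show ?thesis using Q.span_mono[of "U ?i" Aset] by force
  qed
  then show ?thesis by auto
qed

lemma F_W: "F k \<inter> W k = {}"
  using stage_W countable_Pre by (simp add: F_eq)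

lemma A_Z: "countable (Aset \<inter> Z i)"
proof -
  have "Aset \<inter> Z i \<subseteq> U i"
  proof
    fix y assume y: "y \<in> Aset \<inter> Z i"
    then obtain k where k: "y \<in> F k" by (auto simp: Aset_def)
    show "y \<in> U i"
    proof (cases "(k, i) \<in> r")
      case True then show ?thesis using U_mono k by (auto simp: U_def)
    next
      case False
      then have "(i, k) \<in> r" "i \<noteq> k" using totalr by auto
      then have "i \<in> underS r k" by (auto simp: underS_def)
      then have "Z i \<subseteq> W k" by (auto simp: W_def)
      then show ?thesis using y k F_W by auto
    qed
  qed
  then show ?thesis using countable_U[of i] countable_subset by blast
qed

lemma A_pos:
  assumes v: "v \<noteq> 0" and C: "\<not> negligible (Cl S)"
  shows "uncountable (Aset \<inter> Tc p v ` Cl S)"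
proof
  let ?c = "(p, v, S)"
  let ?g = "\<lambda>t::real. code ((0,0), ((0,0),(0,0),{}), ?c, t)"
  let ?J = "range ?g"
  have injg: "inj ?g"
  proof (rule injI)
    fix s t assume "?g s = ?g t"
    then have "((0::real,0::real), ((0::real,0::real),(0::real,0::real),{}::nat set), ?c, s) = ((0,0), ((0,0),(0,0),{}), ?c, t)"
      using injD[OF injc] by blast
    then show "s = t" by simp
  qed
  have J: "uncountable ?J"
  proof
    assume "countable ?J"
    then have "countable (UNIV :: real set)" using countable_image_inj_on injg by blast
    then show False using uncountable_UNIV_real by blast
  qed
  have ok: "posok i" and PCi: "PC i = Tc p v ` Cl S" if iJ: "i \<in> ?J" for i
  proof -
    obtain t where t: "i = ?g t" using iJ by blast
    have "fst (snd (snd (dec i))) = ?c" unfolding t dec_code by simp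
    then show "posok i" "PC i = Tc p v ` Cl S" using v C by (simp_all add: posok_def PC_def)
  qed
  let ?b = "\<lambda>i. bsel i (Pre i)"
  have bprop: "?b i \<in> F i \<and> ?b i \<in> Tc p v ` Cl S \<and> ?b i \<notin> Q.span (Pre i)" if "i \<in> ?J" for i
  proof -
    have "?b i \<in> stage i (Pre i)" by (rule bsel_in_stage[OF ok[OF that]])
    then have "?b i \<in> F i" by (simp only: F_eq)
    then show ?thesis using bsel[OF ok[OF that] countable_Pre] PCi[OF that] by simp
  qed
  have injb: "inj_on ?b ?J"
  proof (rule inj_onI)
    fix i k assume i: "i \<in> ?J" and k: "k \<in> ?J" and eq: "?b i = ?b k"
    show "i = k"
    proof (rule ccontr)
      assume ne: "i \<noteq> k"
      show False
      proof (cases "(i, k) \<in> r")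
        case True
        then have "i \<in> underS r k" using ne by (auto simp: underS_def)
        then have "?b i \<in> Pre k" using bprop[OF i] by (auto simp: Pre_def)
        then have "?b k \<in> Q.span (Pre k)" using eq Q.span_base[of "?b i" "Pre k"] by simp
        then show False using bprop[OF k] by blast
      next
        case False
        then have "(k, i) \<in> r" using totalr by blast
        then have "k \<in> underS r i" using ne by (auto simp: underS_def)
        then have "?b k \<in> Pre i" using bprop[OF k] by (auto simp: Pre_def)
        then have "?b i \<in> Q.span (Pre i)" using eq Q.span_base[of "?b k" "Pre i"] by simp
        then show False using bprop[OF i] by blast
      qed
    qed
  qed
  moreover assume "countable (Aset \<inter> Tc p v ` Cl S)"
  moreover have "?b ` ?J \<subseteq> Aset \<inter> Tc p v ` Cl S"
  proof
    fix y assume "y \<in> ?b ` ?J"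
    then obtain i where i: "i \<in> ?J" "y = ?b i" by blast
    then show "y \<in> Aset \<inter> Tc p v ` Cl S" using bprop[OF i(1)] unfolding Aset_def by blast
  qed
  ultimately have "countable (?b ` ?J)" using countable_subset by blast
  then have "countable ?J" using countable_image_inj_on injb by blast
  then show False using J by blast
qed

end


context constr begin

lemma line_result:
  assumes ch: "CH" and L: "is_line l" and iso: "isometry_onto T l"
  shows "strong_sierpinski_set (T -` (Aset \<inter> l))"
proof -
  obtain p v where v: "v \<noteq> 0" and l: "l = {p + t *\<^sub>R v | t. True}" using L by (auto simp: is_line_def)
  have rl: "range (Tc p v) = l" using range_Tc[OF v] l by simp
  have dT: "\<And>x y. dist (T x) (T y) = dist x y" and rT: "range T = l" using iso by (auto simp: isometry_onto_def)
  have injT: "inj T"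
  proof (rule injI)
    fix x y assume "T x = T y" then have "dist x y = 0" using dT[of x y] by simp
    then show "x = y" by simp
  qed
  define \<sigma> where "\<sigma> t = Tinv p v (T t)" for t
  have T\<sigma>: "T t = Tc p v (\<sigma> t)" for t
  proof -
    have "T t \<in> range (Tc p v)" using rT rl by auto
    then obtain s where "T t = Tc p v s" by auto
    then show ?thesis using v by (simp add: \<sigma>_def Tinv_Tc)
  qed
  have d\<sigma>: "dist (\<sigma> x) (\<sigma> y) = dist x y" for x y
    using dist_Tc[OF v, of p "\<sigma> x" "\<sigma> y"] T\<sigma>[of x] T\<sigma>[of y] dT[of x y] by simp
  define SS where "SS = T -` (Aset \<inter> l)"
  have SS: "t \<in> SS \<longleftrightarrow> T t \<in> Aset" for t using rT by (auto simp: SS_def)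
  have pos: "uncountable (SS \<inter> B)" if B: "B \<in> sets borel" "emeasure lborel B > 0" for B
  proof -
    obtain K where K: "compact K" "K \<subseteq> B" "\<not> negligible K" using positive_compact[OF B] by blast
    let ?K' = "\<sigma> ` K"
    have "1-lipschitz_on K \<sigma>" by (rule lipschitz_onI) (simp_all add: d\<sigma>)
    then have "continuous_on K \<sigma>" by (rule lipschitz_on_continuous_on)
    then have "compact ?K'" using K(1) compact_continuous_image by blast
    then have "closed ?K'" by (rule compact_imp_closed)
    then obtain Sc where Sc: "Cl Sc = ?K'" using closed_code by blast
    have inj\<sigma>: "inj_on \<sigma> K"
    proof (rule inj_onI)
      fix x y assume "\<sigma> x = \<sigma> y" then have "dist x y = 0" using d\<sigma>[of x y] by simp
      then show "x = y" by simp
    qed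
    have nK': "\<not> negligible ?K'"
    proof
      assume n: "negligible ?K'"
      let ?\<rho> = "inv_into K \<sigma>"
      have "negligible (?\<rho> ` ?K')"
      proof (rule negligible_iso_image[OF n])
        fix x y assume x: "x \<in> ?K'" and y: "y \<in> ?K'"
        have "?\<rho> x \<in> K" "?\<rho> y \<in> K" using x y by (auto simp: inv_into_into)
        have "dist (?\<rho> x) (?\<rho> y) = dist (\<sigma> (?\<rho> x)) (\<sigma> (?\<rho> y))" by (simp add: d\<sigma>)
        also have "\<dots> = dist x y" using x y by (simp add: f_inv_into_f)
        finally show "dist (?\<rho> x) (?\<rho> y) \<le> dist x y" by simp
      qed
      moreover have "K \<subseteq> ?\<rho> ` ?K'"
      proof
        fix t assume "t \<in> K"
        then have "?\<rho> (\<sigma> t) = t" using inj\<sigma> by (simp add: inv_into_f_f)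
        then show "t \<in> ?\<rho> ` ?K'" using \<open>t \<in> K\<close> by (metis imageI)
      qed
      ultimately show False using K(3) negligible_subset by blast
    qed
    have "\<not> negligible (Cl Sc)" using nK' Sc by simp
    then have U: "uncountable (Aset \<inter> Tc p v ` Cl Sc)" by (rule A_pos[OF v])
    have "Aset \<inter> Tc p v ` Cl Sc \<subseteq> T ` (SS \<inter> B)"
    proof
      fix y assume y: "y \<in> Aset \<inter> Tc p v ` Cl Sc"
      then obtain t where t: "t \<in> K" "y = Tc p v (\<sigma> t)" using Sc by auto
      then have "y = T t" using T\<sigma> by simp
      then have "t \<in> SS" using y SS by simp
      then show "y \<in> T ` (SS \<inter> B)" using t(1) K(2) \<open>y = T t\<close> by blast
    qed
    then show ?thesis using U countable_image countable_subset by metis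
  qed
  have null: "countable (SS \<inter> N)" if N: "N \<in> null_sets lebesgue" for N
  proof -
    have "negligible N" using N by (simp add: negligible_iff_null_sets)
    then have "negligible (\<sigma> ` N)" by (rule negligible_iso_image) (simp add: d\<sigma>)
    then obtain Sc where Sc: "\<sigma> ` N \<subseteq> Gd Sc" "negligible (Gd Sc)" using negligible_Gd_cover by blast
    let ?i = "code ((0,0), (p, v, Sc), ((0,0),(0,0),{}), 0)"
    have Zi: "Z ?i = Tc p v ` Gd Sc" using v Sc(2) by (simp add: Z_def)
    have "T ` (SS \<inter> N) \<subseteq> Aset \<inter> Z ?i"
    proof
      fix y assume "y \<in> T ` (SS \<inter> N)"
      then obtain t where t: "t \<in> SS" "t \<in> N" "y = T t" by blast
      have "y = Tc p v (\<sigma> t)" using t(3) T\<sigma> by simp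
      then have "y \<in> Z ?i" using Zi Sc(1) t(2) by blast
      then show "y \<in> Aset \<inter> Z ?i" using t(1,3) SS by blast
    qed
    then have "countable (T ` (SS \<inter> N))" using A_Z countable_subset by blast
    then show ?thesis using countable_image_inj_on injT inj_on_subset subset_UNIV by metis
  qed
  have "uncountable SS"
  proof -
    have "uncountable (SS \<inter> UNIV)" by (rule pos) simp_all
    then show ?thesis by simp
  qed
  then have "SS \<approx> (UNIV :: real set)" using ch by (simp add: CH_def)
  then show ?thesis using pos null unfolding strong_sierpinski_set_def sierpinski_set_def SS_def by blast
qed

end


lemma exists_code: "\<exists>code :: data \<Rightarrow> real. inj code"
proof -
  obtain h :: "real \<Rightarrow> real \<times> real" where h: "surj h" using real_pair_bij by blast
  define g where "g = inv h"
  have ig: "inj g" unfolding g_def using h by (rule surj_imp_inj_inv)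
  obtain e :: "nat set \<Rightarrow> real" where "bij_betw e UNIV UNIV" using nat_sets_eqpoll_reals by (auto simp: eqpoll_def)
  then have ie: "inj e" by (simp add: bij_betw_def)
  define enc where "enc = (\<lambda>(p, v, S). g (g p, g (g v, e S)))"
  have ienc: "inj enc" unfolding enc_def by (auto simp: inj_def inj_eq[OF ig] inj_eq[OF ie])
  define code where "code = (\<lambda>(x::real\<times>real, n, c, t::real). g (g x, g (enc n, g (enc c, t))))"
  have "inj code" unfolding code_def by (auto simp: inj_def inj_eq[OF ig] inj_eq[OF ienc])
  then show ?thesis by blast
qed

theorem mainTheorem11:
  assumes "CH"
  shows "\<exists>A :: (real \<times> real) set. hamel_basis_R2 A \<and>
           (\<forall>l T. is_line l \<longrightarrow> isometry_onto T l \<longrightarrow>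
              strong_sierpinski_set (T -` (A \<inter> l)))"
proof -
  obtain r :: "real rel" where r: "Well_order r" "Field r = UNIV" "\<And>a. countable (underS r a)"
    using CH_wo[OF assms] by blast
  obtain code :: "data \<Rightarrow> real" where c: "inj code" using exists_code by blast
  interpret K: constr r code using r c by unfold_locales auto
  have "hamel_basis_R2 K.Aset" unfolding hamel_basis_R2_def using K.indep_A K.span_A by simp
  moreover have "\<forall>l T. is_line l \<longrightarrow> isometry_onto T l \<longrightarrow> strong_sierpinski_set (T -` (K.Aset \<inter> l))"
    using K.line_result[OF assms] by blast
  ultimately show ?thesis by blast
qed


end
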